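(* Let $M(\mathbb{1},\lambda,e,V)$ be the generic characteristic matrix of a $\mathbb{Z}^d$-periodic graph specialized at $z=\mathbb{1}=(1,\dots,1)$. Then $\det M(\mathbb{1},\lambda,e,V)$ is cancellation-free.
   Context: A $\mathbb{Z}^d$-periodic graph $\Gamma$ is a simple undirected graph of bounded degree with a free $\mathbb{Z}^d$-action by automorphisms with finitely many vertex and edge orbits; $W$ is a set of vertex-orbit representatives, identified with $[n]$. The generic characteristic matrix is $M(z,\lambda,e,V)=\lambda I_n-H(z,e,V)$, where $H(z,e,V)$ has $(v,u)$ entry $\delta_{v,u}V(v)-\sum_{\alpha\in\mathbb{Z}^d: v\sim\alpha+u}e_{(v,\alpha+u)}z^\alpha$ with independent indeterminates $e$ (one per edge orbit) and $V(v)$ (one per $v\in W$). For an $n\times n$ polynomial matrix $M=(f_{i,j})$, $\det M=\sum_{w\in S_n}\mathrm{sgn}(w)M_w$ with $M_w=\prod_i f_{i,w(i)}$, and $\det M$ is cancellation-free if for every $w$ with $M_w\neq0$ the support (set of monomials, here in $\lambda,e,V$) of $M_w$ is contained in the support of $\det M$. *)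

theory Defs
  imports Main "HOL-Library.Poly_Mapping" "HOL-Library.Function_Algebras"
    "HOL-Combinatorics.Permutations"
begin

text \<open>Vertices of a Z^d-periodic graph with vertex-orbit representatives W = [n] = {0..<n}:
  the vertex alpha + v (v in W, alpha in Z^d) is encoded as the pair (v, alpha).
  Z^d is rendered as functions 'd => int for a finite index type 'd.\<close>

type_synonym 'd vtx = "nat \<times> ('d \<Rightarrow> int)"

definition translate :: "('d \<Rightarrow> int) \<Rightarrow> 'd vtx \<Rightarrow> 'd vtx" where
  "translate c x = (fst x, snd x + c)"

definition periodic_graph :: "nat \<Rightarrow> ('d::finite vtx \<Rightarrow> 'd vtx \<Rightarrow> bool) \<Rightarrow> bool" where
  "periodic_graph n adj \<longleftrightarrow>
     (\<forall>x y. adj x y \<longrightarrow> fst x < n \<and> fst y < n) \<and>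
     (\<forall>x y. adj x y \<longrightarrow> adj y x) \<and>
     (\<forall>x. \<not> adj x x) \<and>
     (\<forall>x y c. adj (translate c x) (translate c y) \<longleftrightarrow> adj x y) \<and>
     (\<exists>D::nat. \<forall>x. finite {y. adj x y} \<and> card {y. adj x y} \<le> D)"

definition edge_orbit :: "'d vtx \<Rightarrow> 'd vtx \<Rightarrow> 'd vtx set set" where
  "edge_orbit x y = {{translate c x, translate c y} | c. True}"

text \<open>Indeterminates: lambda, one e per edge orbit, one V(v) per v in W.\<close>
datatype 'd var = Lam | Evar "'d vtx set set" | Vvar nat

type_synonym 'd mpoly = "('d var \<Rightarrow>\<^sub>0 nat) \<Rightarrow>\<^sub>0 int"

definition PVar :: "'d var \<Rightarrow> 'd mpoly" where
  "PVar x = Poly_Mapping.single (Poly_Mapping.single x 1) 1"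

text \<open>Entry (v,u) of M(1,lambda,e,V) = lambda I - H(1,e,V), where
  H(z,e,V)_{v,u} = delta_{v,u} V(v) - sum over alpha with v ~ alpha+u of e_(v,alpha+u) z^alpha.\<close>
definition charmat_one :: "('d::finite vtx \<Rightarrow> 'd vtx \<Rightarrow> bool) \<Rightarrow> nat \<Rightarrow> nat \<Rightarrow> 'd mpoly" where
  "charmat_one adj v u =
     (if v = u then PVar Lam - PVar (Vvar v) else 0)
     + (\<Sum>\<alpha>\<in>{\<alpha>. adj (v, 0) (u, \<alpha>)}. PVar (Evar (edge_orbit (v, 0) (u, \<alpha>))))"

definition perm_term :: "nat \<Rightarrow> (nat \<Rightarrow> nat \<Rightarrow> 'a::comm_ring_1) \<Rightarrow> (nat \<Rightarrow> nat) \<Rightarrow> 'a" where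
  "perm_term n f w = (\<Prod>i<n. f i (w i))"

definition det_poly :: "nat \<Rightarrow> (nat \<Rightarrow> nat \<Rightarrow> 'a::comm_ring_1) \<Rightarrow> 'a" where
  "det_poly n f = (\<Sum>w\<in>{p. p permutes {0..<n}}. of_int (sign w) * perm_term n f w)"

definition cancellation_free :: "nat \<Rightarrow> (nat \<Rightarrow> nat \<Rightarrow> 'd mpoly) \<Rightarrow> bool" where
  "cancellation_free n f \<longleftrightarrow>
     (\<forall>w\<in>{p. p permutes {0..<n}}. perm_term n f w \<noteq> 0 \<longrightarrow>
        Poly_Mapping.keys (perm_term n f w) \<subseteq> Poly_Mapping.keys (det_poly n f))"

end

theory Submission
  imports Defs
begin

section \<open>Sign coherence of polynomials\<close>

definition sgnm :: "nat \<Rightarrow> ('d var \<Rightarrow>\<^sub>0 nat) \<Rightarrow> int" where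
  "sgnm n m = (-1) ^ (\<Sum>i<n. Poly_Mapping.lookup m (Vvar i))"

lemma sgnm_add: "sgnm n (a + b) = sgnm n a * sgnm n b"
  by (simp add: sgnm_def lookup_add sum.distrib power_add)

lemma sgnm_sq: "sgnm n m * sgnm n m = 1"
  by (simp add: sgnm_def flip: power_add)

definition coh :: "nat \<Rightarrow> 'd mpoly \<Rightarrow> bool" where
  "coh n P \<longleftrightarrow> (\<forall>m. sgnm n m * Poly_Mapping.lookup P m \<ge> 0)"

lemma Sum_any_nonneg: "(\<And>a. (g a :: int) \<ge> 0) \<Longrightarrow> Sum_any g \<ge> 0"
  by (simp add: Sum_any.expand_set sum_nonneg)

lemma coh_mult:
  assumes P: "coh n P" and Q: "coh n Q"
  shows "coh n (P * Q)"
  unfolding coh_def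
proof
  fix k
  have "sgnm n k * Poly_Mapping.lookup (P * Q) k
     = sgnm n k * (\<Sum>l. Poly_Mapping.lookup P l * (\<Sum>q. Poly_Mapping.lookup Q q when k = l + q))"
    by (simp add: lookup_mult)
  also have "\<dots> = (\<Sum>l. sgnm n k * (Poly_Mapping.lookup P l * (\<Sum>q. Poly_Mapping.lookup Q q when k = l + q)))"
  proof (rule Sum_any_right_distrib)
    show "finite {l. Poly_Mapping.lookup P l * (\<Sum>q. Poly_Mapping.lookup Q q when k = l + q) \<noteq> 0}"
      by (rule finite_subset[of _ "Poly_Mapping.keys P"]) (auto simp: in_keys_iff)
  qed
  also have "\<dots> \<ge> 0"
  proof (rule Sum_any_nonneg)
    fix l
    have "sgnm n k * (Poly_Mapping.lookup P l * (\<Sum>q. Poly_Mapping.lookup Q q when k = l + q))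
       = (\<Sum>q. sgnm n k * Poly_Mapping.lookup P l * (Poly_Mapping.lookup Q q when k = l + q))"
      unfolding mult.assoc[symmetric]
    proof (rule Sum_any_right_distrib)
      show "finite {q. (Poly_Mapping.lookup Q q when k = l + q) \<noteq> 0}"
        by (rule finite_subset[of _ "Poly_Mapping.keys Q"]) (auto simp: in_keys_iff)
    qed
    also have "\<dots> \<ge> 0"
    proof (rule Sum_any_nonneg)
      fix q
      show "0 \<le> sgnm n k * Poly_Mapping.lookup P l * (Poly_Mapping.lookup Q q when k = l + q)"
      proof (cases "k = l + q")
        case True
        have "sgnm n k * Poly_Mapping.lookup P l * Poly_Mapping.lookup Q q
            = (sgnm n l * Poly_Mapping.lookup P l) * (sgnm n q * Poly_Mapping.lookup Q q)"
          by (simp add: True sgnm_add)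
        also have "\<dots> \<ge> 0" using P Q unfolding coh_def by simp
        finally show ?thesis using True by simp
      qed simp
    qed
    finally show "0 \<le> sgnm n k * (Poly_Mapping.lookup P l * (\<Sum>q. Poly_Mapping.lookup Q q when k = l + q))" .
  qed
  finally show "0 \<le> sgnm n k * Poly_Mapping.lookup (P * Q) k" .
qed

lemma coh_one: "coh n 1"
  by (simp add: coh_def lookup_one when_def sgnm_def)

lemma coh_prod: "(\<And>i. i \<in> A \<Longrightarrow> coh n (f i)) \<Longrightarrow> coh n (prod f A)"
proof (induction A rule: infinite_finite_induct)
  case (infinite A)
  then show ?case by (simp add: coh_one)
next
  case empty
  then show ?case by (simp add: coh_one)
next
  case (insert x F)
  then show ?case by (simp add: coh_mult)
qed

lemma coh_add: "coh n P \<Longrightarrow> coh n Q \<Longrightarrow> coh n (P + Q)"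
  by (simp add: coh_def lookup_add distrib_left)

lemma coh_zero: "coh n 0"
  by (simp add: coh_def)

lemma coh_sum: "(\<And>i. i \<in> A \<Longrightarrow> coh n (f i)) \<Longrightarrow> coh n (sum f A)"
  by (induction A rule: infinite_finite_induct) (auto simp: coh_zero coh_add)

lemma lookup_PVar: "Poly_Mapping.lookup (PVar x) m = (if m = Poly_Mapping.single x 1 then 1 else 0)"
  by (simp add: PVar_def lookup_single when_def eq_commute)

lemma coh_PVar:
  assumes "\<And>i. i < n \<Longrightarrow> x \<noteq> Vvar i"
  shows "coh n (PVar x)"
proof -
  have "(\<Sum>i<n. Poly_Mapping.lookup (Poly_Mapping.single x 1) (Vvar i)) = (0::nat)"
    using assms by (simp add: lookup_single when_def)
  then show ?thesis by (simp add: coh_def lookup_PVar sgnm_def)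
qed

lemma coh_neg_PVar:
  assumes "v < n"
  shows "coh n (- PVar (Vvar v :: 'd var))"
proof -
  have "(\<Sum>i<n. Poly_Mapping.lookup (Poly_Mapping.single (Vvar v :: 'd var) 1) (Vvar i)) = (\<Sum>i<n. if i = v then 1 else (0::nat))"
    by (rule sum.cong) (auto simp: lookup_single when_def)
  also have "\<dots> = 1" using assms by simp
  finally have h: "(\<Sum>i<n. Poly_Mapping.lookup (Poly_Mapping.single (Vvar v :: 'd var) 1) (Vvar i)) = (1::nat)" .
  have s: "sgnm n (Poly_Mapping.single (Vvar v :: 'd var) 1) = -1"
    by (simp only: sgnm_def h) simp
  show ?thesis using s by (simp add: coh_def lookup_PVar)
qed

lemma coh_entry:
  assumes "v < n"
  shows "coh n (charmat_one adj v u)"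
proof -
  have "coh n (if v = u then PVar Lam - PVar (Vvar v) else 0)"
  proof (cases "v = u")
    case True
    have "PVar Lam - PVar (Vvar v) = PVar Lam + (- PVar (Vvar v))" by simp
    then show ?thesis using True coh_add[OF coh_PVar[of n Lam] coh_neg_PVar[OF assms]] by simp
  qed (simp add: coh_zero)
  moreover have "coh n (\<Sum>\<alpha>\<in>{\<alpha>. adj (v, 0) (u, \<alpha>)}. PVar (Evar (edge_orbit (v, 0) (u, \<alpha>))))"
    by (rule coh_sum, rule coh_PVar) simp
  ultimately show ?thesis unfolding charmat_one_def by (rule coh_add)
qed

definition cls :: "'d var \<Rightarrow> nat set" where
  "cls x = (case x of Evar Ob \<Rightarrow> fst ` \<Union>Ob | _ \<Rightarrow> {})"

definition allowed :: "nat \<Rightarrow> nat \<Rightarrow> 'd var \<Rightarrow> bool" where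
  "allowed v u x \<longleftrightarrow> cls x \<subseteq> {v, u} \<and> (v \<noteq> u \<longrightarrow> cls x = {v, u})"

lemma cls_orbit:
  fixes \<alpha> :: "'d \<Rightarrow> int"
  shows "cls (Evar (edge_orbit (v, 0) (u, \<alpha>))) = {v, u}"
proof -
  have "{(v, 0), (u, \<alpha>)} \<in> edge_orbit (v, 0) (u, \<alpha>)"
    unfolding edge_orbit_def translate_def by (rule CollectI, rule exI[of _ 0]) simp
  then have "{v, u} \<subseteq> fst ` \<Union>(edge_orbit (v, 0) (u, \<alpha>))" by force
  moreover have "fst ` \<Union>(edge_orbit (v, 0) (u, \<alpha>)) \<subseteq> {v, u}"
    unfolding edge_orbit_def translate_def by auto
  ultimately have "fst ` \<Union>(edge_orbit (v, 0) (u, \<alpha>)) = {v, u}" by blast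
  then show ?thesis by (simp add: cls_def)
qed

lemma keys_PVar: "Poly_Mapping.keys (PVar x) = {Poly_Mapping.single x 1}"
  by (simp add: PVar_def)

lemma keys_entry:
  fixes adj :: "'d::finite vtx \<Rightarrow> 'd vtx \<Rightarrow> bool"
  shows "Poly_Mapping.keys (charmat_one adj v u) \<subseteq> {Poly_Mapping.single x 1 | x. allowed v u x}"
proof -
  have A: "Poly_Mapping.keys (if v = u then PVar (Lam :: 'd var) - PVar (Vvar v) else 0)
      \<subseteq> {Poly_Mapping.single x 1 | x. allowed v u x}"
  proof (cases "v = u")
    case True
    have K: "Poly_Mapping.keys (PVar (Lam :: 'd var) - PVar (Vvar v)) \<subseteq>
       {Poly_Mapping.single Lam 1, Poly_Mapping.single (Vvar v) 1}"
      using keys_diff[of "PVar (Lam :: 'd var)" "PVar (Vvar v)"] unfolding keys_PVar by auto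
    have "allowed v u (Lam :: 'd var)" "allowed v u (Vvar v :: 'd var)"
      using True by (auto simp: allowed_def cls_def)
    then have L: "Poly_Mapping.single (Lam :: 'd var) 1 \<in> {Poly_Mapping.single x 1 | x. allowed v u x}"
      and V: "Poly_Mapping.single (Vvar v :: 'd var) 1 \<in> {Poly_Mapping.single x 1 | x. allowed v u x}"
      by blast+
    have S: "{Poly_Mapping.single (Lam :: 'd var) 1, Poly_Mapping.single (Vvar v) 1}
       \<subseteq> {Poly_Mapping.single x 1 | x. allowed v u x}"
      by (simp only: insert_subset L V empty_subsetI simp_thms)
    show ?thesis unfolding if_P[OF True] by (rule order.trans[OF K S])
  qed simp
  have B: "Poly_Mapping.keys (\<Sum>\<alpha>\<in>{\<alpha>. adj (v, 0) (u, \<alpha>)}. PVar (Evar (edge_orbit (v, 0) (u, \<alpha>))))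
      \<subseteq> {Poly_Mapping.single x 1 | x. allowed v u x}"
  proof (rule order.trans[OF keys_sum], rule UN_least)
    fix \<alpha> :: "'d \<Rightarrow> int"
    have "allowed v u (Evar (edge_orbit (v, 0) (u, \<alpha>)))"
      by (simp add: allowed_def cls_orbit)
    then show "Poly_Mapping.keys (PVar (Evar (edge_orbit (v, 0) (u, \<alpha>))))
       \<subseteq> {Poly_Mapping.single x 1 | x. allowed v u x}"
      unfolding keys_PVar by blast
  qed
  show ?thesis unfolding charmat_one_def
    by (rule order.trans[OF keys_add Un_least[OF A B]])
qed

lemma keys_prod_sub:
  fixes k :: nat
  assumes "\<And>i. i < k \<Longrightarrow> Poly_Mapping.keys (g i) \<subseteq> {Poly_Mapping.single x 1 | x. A i x}"
  shows "Poly_Mapping.keys ((\<Prod>i<k. g i) :: 'd mpoly) \<subseteq>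
     {(\<Sum>i<k. Poly_Mapping.single (x i) 1) | x. \<forall>i<k. A i (x i)}"
  using assms
proof (induction k)
  case 0
  then show ?case by auto
next
  case (Suc k)
  show ?case
  proof
    fix m assume "m \<in> Poly_Mapping.keys ((\<Prod>i<Suc k. g i) :: 'd mpoly)"
    then have "m \<in> Poly_Mapping.keys ((\<Prod>i<k. g i) * g k)" by (simp add: prod.lessThan_Suc)
    then obtain a b where m: "m = a + b" and a: "a \<in> Poly_Mapping.keys ((\<Prod>i<k. g i) :: 'd mpoly)"
      and b: "b \<in> Poly_Mapping.keys (g k)"
      using keys_mult by blast
    have "\<And>i. i < k \<Longrightarrow> Poly_Mapping.keys (g i) \<subseteq> {Poly_Mapping.single x 1 | x. A i x}"
      using Suc.prems by simp
    with Suc.IH a obtain x where ax: "a = (\<Sum>i<k. Poly_Mapping.single (x i) 1)"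
      and xA: "\<forall>i<k. A i (x i)" by blast
    from Suc.prems b obtain y where b_def: "b = Poly_Mapping.single y 1" and yA: "A k y" by blast
    define x' where "x' = x(k := y)"
    have "(\<Sum>i<Suc k. Poly_Mapping.single (x' i) 1) = (\<Sum>i<k. Poly_Mapping.single (x' i) 1) + Poly_Mapping.single y 1"
      by (simp add: x'_def)
    also have "(\<Sum>i<k. Poly_Mapping.single (x' i) 1) = a"
      unfolding ax by (rule sum.cong) (auto simp: x'_def)
    finally have "m = (\<Sum>i<Suc k. Poly_Mapping.single (x' i) 1)" using m b_def by simp
    moreover have "\<forall>i<Suc k. A i (x' i)" using xA yA by (auto simp: x'_def less_Suc_eq)
    ultimately show "m \<in> {(\<Sum>i<Suc k. Poly_Mapping.single (x i) 1) | x. \<forall>i<Suc k. A i (x i)}"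
      by blast
  qed
qed

section \<open>Permutations with the same undirected edge multiset have the same sign\<close>

definition Eset :: "nat set \<Rightarrow> (nat \<Rightarrow> nat) \<Rightarrow> nat set \<Rightarrow> nat set" where
  "Eset S w p = {j \<in> S. w j \<noteq> j \<and> {j, w j} = p}"

lemma Eset_finite: "finite S \<Longrightarrow> finite (Eset S w p)"
  by (simp add: Eset_def)

lemma Eset_nonempty_transfer:
  assumes "finite S" "\<And>p. card (Eset S w p) = card (Eset S w' p)" "j \<in> Eset S w p"
  shows "Eset S w' p \<noteq> {}"
proof
  assume "Eset S w' p = {}"
  then have "card (Eset S w p) = 0" using assms(2) by simp
  then have "Eset S w p = {}" using Eset_finite[OF assms(1)] by simp
  then show False using assms(3) by simp
qed

lemma moved_transfer:
  assumes w: "w permutes S" and w': "w' permutes S" and fin: "finite S"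
    and E: "\<And>p. card (Eset S w p) = card (Eset S w' p)"
    and mv: "w i \<noteq> i"
  shows "w' i \<noteq> i"
proof
  assume fx: "w' i = i"
  have iS: "i \<in> S" using permutes_not_in[OF w] mv by blast
  have "i \<in> Eset S w {i, w i}" using iS mv by (simp add: Eset_def)
  then have "Eset S w' {i, w i} \<noteq> {}" by (rule Eset_nonempty_transfer[OF fin E])
  then obtain j where j: "j \<in> S" "w' j \<noteq> j" "{j, w' j} = {i, w i}" by (auto simp: Eset_def)
  then have "(j = i \<and> w' j = w i) \<or> (j = w i \<and> w' j = i)" by (auto simp: doubleton_eq_iff)
  then show False
  proof
    assume "j = i \<and> w' j = w i" then show False using j fx by simp
  next
    assume a: "j = w i \<and> w' j = i"
    then have "w' j = w' i" using fx by metis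
    then have "j = i" using permutes_inj[OF w'] by (simp add: inj_eq)
    then show False using a mv by simp
  qed
qed

lemma back_or_forth:
  assumes w: "w permutes S" and w': "w' permutes S" and fin: "finite S"
    and E: "\<And>p. card (Eset S w p) = card (Eset S w' p)"
    and mv: "w i \<noteq> i"
  shows "w' i = w i \<or> w (w' i) = i"
proof -
  have mv': "w' i \<noteq> i" by (rule moved_transfer[OF w w' fin E mv])
  have iS: "i \<in> S" using permutes_not_in[OF w] mv by blast
  have "i \<in> Eset S w' {i, w' i}" using iS mv' by (simp add: Eset_def)
  then have "Eset S w {i, w' i} \<noteq> {}" by (rule Eset_nonempty_transfer[OF fin E[symmetric]])
  then obtain j where j: "j \<in> S" "w j \<noteq> j" "{j, w j} = {i, w' i}" by (auto simp: Eset_def)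
  then have "(j = i \<and> w j = w' i) \<or> (j = w' i \<and> w j = i)" by (auto simp: doubleton_eq_iff)
  then show ?thesis by auto
qed

lemma R_invariant:
  assumes w: "w permutes S" and w': "w' permutes S" and fin: "finite S"
    and E: "\<And>p. card (Eset S w p) = card (Eset S w' p)"
    and R: "w' i \<noteq> w i"
  shows "w' (w i) \<noteq> w (w i)"
proof
  assume eq: "w' (w i) = w (w i)"
  have mv: "w i \<noteq> i"
  proof
    assume "w i = i"
    moreover have "w' i = i"
    proof (rule ccontr)
      assume "w' i \<noteq> i"
      then have "w i \<noteq> i" by (rule moved_transfer[OF w' w fin E[symmetric]])
      then show False using \<open>w i = i\<close> by simp
    qed
    ultimately show False using R by simp
  qed
  have iS: "i \<in> S" using permutes_not_in[OF w] mv by blast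
  have bk: "w (w' i) = i" using back_or_forth[OF w w' fin E mv] R by simp
  define j where "j = w i"
  have wj: "w j \<noteq> i"
  proof
    assume "w j = i"
    then have "w (w' i) = w j" using bk by simp
    then have "w' i = j" using permutes_inj[OF w] by (simp add: inj_eq)
    then show False using R j_def by simp
  qed
  have ij: "i \<noteq> j" using mv j_def by simp
  have "i \<in> Eset S w {i, j}" using iS mv j_def by (simp add: Eset_def)
  then have "Eset S w' {i, j} \<noteq> {}" by (rule Eset_nonempty_transfer[OF fin E])
  then obtain k where k: "k \<in> S" "w' k \<noteq> k" "{k, w' k} = {i, j}" by (auto simp: Eset_def)
  then have "(k = i \<and> w' k = j) \<or> (k = j \<and> w' k = i)" by (auto simp: doubleton_eq_iff)
  then show False
  proof
    assume "k = i \<and> w' k = j" then show False using R j_def by auto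
  next
    assume "k = j \<and> w' k = i" then show False using eq wj j_def by auto
  qed
qed

lemma sign_eq_Eset:
  assumes w: "w permutes S" and w': "w' permutes S" and fin: "finite S"
    and E: "\<And>p. card (Eset S w p) = card (Eset S w' p)"
  shows "sign w = sign w'"
proof -
  define R where "R = {i. w' i \<noteq> w i}"
  have RS: "R \<subseteq> S"
  proof
    fix x assume "x \<in> R"
    then have "w' x \<noteq> w x" by (simp add: R_def)
    then show "x \<in> S" using permutes_not_in[OF w, of x] permutes_not_in[OF w', of x]
      by metis
  qed
  have finR: "finite R" using finite_subset[OF RS fin] .
  have inv: "\<And>i. i \<in> R \<Longrightarrow> w i \<in> R"
    using R_invariant[OF w w' fin E] by (simp add: R_def)
  have mvR: "\<And>i. i \<in> R \<Longrightarrow> w i \<noteq> i"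
  proof -
    fix i assume iR: "i \<in> R"
    show "w i \<noteq> i"
    proof
      assume "w i = i"
      moreover have "w' i = i"
      proof (rule ccontr)
        assume "w' i \<noteq> i"
        then have "w i \<noteq> i" by (rule moved_transfer[OF w' w fin E[symmetric]])
        then show False using \<open>w i = i\<close> by simp
      qed
      ultimately show False using iR by (simp add: R_def)
    qed
  qed
  have bk: "\<And>i. i \<in> R \<Longrightarrow> w (w' i) = i"
    using back_or_forth[OF w w' fin E] mvR by (auto simp: R_def)
  have injw: "inj w" by (rule permutes_inj[OF w])
  have wR: "w ` R = R"
  proof (rule card_subset_eq[OF finR])
    show "w ` R \<subseteq> R" using inv by blast
    show "card (w ` R) = card R" using card_image[of w R] injw by (simp add: inj_on_subset)
  qed
  define u where "u = (\<lambda>k. if k \<in> R then w k else k)"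
  have "bij_betw w R R" using wR inj_on_subset[OF injw subset_UNIV] by (simp add: bij_betw_def)
  then have "bij_betw u R R" by (subst bij_betw_cong[of R u w]) (auto simp: u_def)
  then have "u permutes R" by (rule bij_imp_permutes) (simp add: u_def)
  then have pu: "permutation u" by (rule permutes_imp_permutation[OF finR])
  have pw': "permutation w'" by (rule permutes_imp_permutation[OF fin w'])
  have weq: "w = w' \<circ> u \<circ> u"
  proof
    fix k
    show "w k = (w' \<circ> u \<circ> u) k"
    proof (cases "k \<in> R")
      case True
      have k1: "w k \<in> R" using inv True .
      have k2: "w (w k) \<in> R" using inv k1 .
      have "w (w' (w (w k))) = w (w k)" using bk k2 .
      then have "w' (w (w k)) = w k" using injw by (simp add: inj_eq)
      then show ?thesis using True k1 by (simp add: u_def)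
    next
      case False
      then show ?thesis by (simp add: u_def R_def)
    qed
  qed
  have "sign w = sign (w' \<circ> u \<circ> u)" using weq by simp
  also have "\<dots> = sign w' * sign u * sign u"
    by (simp add: sign_compose permutation_compose pu pw')
  also have "\<dots> = sign w'" by (simp add: sign_def)
  finally show ?thesis .
qed

lemma lookup_sum_single:
  fixes n :: nat and x :: "nat \<Rightarrow> 'a"
  shows "Poly_Mapping.lookup (\<Sum>i<n. Poly_Mapping.single (x i) (1::nat)) y = card {i \<in> {..<n}. x i = y}"
proof -
  have "Poly_Mapping.lookup (\<Sum>i<n. Poly_Mapping.single (x i) (1::nat)) y
      = (\<Sum>i<n. if x i = y then 1 else (0::nat))"
    unfolding lookup_sum lookup_single when_def by (rule refl)
  also have "\<dots> = (\<Sum>i\<in>{i \<in> {..<n}. x i = y}. (1::nat))"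
    by (rule sum.inter_filter[symmetric]) simp
  also have "\<dots> = card {i \<in> {..<n}. x i = y}" by simp
  finally show ?thesis .
qed

lemma card_group:
  fixes x :: "nat \<Rightarrow> 'a" and c :: "'a \<Rightarrow> 'b"
  assumes "finite T" "x ` I \<subseteq> T" "finite I"
  shows "card {j \<in> I. c (x j) = p} = (\<Sum>y\<in>{y \<in> T. c y = p}. card {j \<in> I. x j = y})"
proof -
  have "{j \<in> I. c (x j) = p} = (\<Union>y\<in>{y \<in> T. c y = p}. {j \<in> I. x j = y})"
    using assms(2) by auto
  then have "card {j \<in> I. c (x j) = p} = card (\<Union>y\<in>{y \<in> T. c y = p}. {j \<in> I. x j = y})"
    by simp
  also have "\<dots> = (\<Sum>y\<in>{y \<in> T. c y = p}. card {j \<in> I. x j = y})"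
    by (rule card_UN_disjoint) (use assms in auto)
  finally show ?thesis .
qed

lemma count_transfer:
  fixes x x' :: "nat \<Rightarrow> 'a" and c :: "'a \<Rightarrow> 'b" and n :: nat
  assumes "(\<Sum>i<n. Poly_Mapping.single (x i) (1::nat)) = (\<Sum>i<n. Poly_Mapping.single (x' i) 1)"
  shows "card {j \<in> {..<n}. c (x j) = p} = card {j \<in> {..<n}. c (x' j) = p}"
proof -
  define T where "T = x ` {..<n} \<union> x' ` {..<n}"
  have eq: "\<And>y. card {i \<in> {..<n}. x i = y} = card {i \<in> {..<n}. x' i = y}"
    using assms lookup_sum_single by metis
  have "card {j \<in> {..<n}. c (x j) = p} = (\<Sum>y\<in>{y \<in> T. c y = p}. card {j \<in> {..<n}. x j = y})"
    by (rule card_group) (auto simp: T_def)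
  also have "\<dots> = (\<Sum>y\<in>{y \<in> T. c y = p}. card {j \<in> {..<n}. x' j = y})"
    using eq by simp
  also have "\<dots> = card {j \<in> {..<n}. c (x' j) = p}"
    by (rule card_group[symmetric]) (auto simp: T_def)
  finally show ?thesis .
qed

lemma Eset_choice:
  fixes x :: "nat \<Rightarrow> 'd var" and n :: nat
  assumes "\<forall>i<n. allowed i (w i) (x i)"
  shows "Eset {..<n} w p = (if card p = 2 then {j \<in> {..<n}. cls (x j) = p} else {})"
proof (cases "card p = 2")
  case True
  have "j \<in> Eset {..<n} w p \<longleftrightarrow> j \<in> {j \<in> {..<n}. cls (x j) = p}" for j
  proof (cases "j < n")
    case jn: True
    show ?thesis
    proof (cases "w j = j")
      case True
      have "cls (x j) \<subseteq> {j}" using assms jn True by (auto simp: allowed_def)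
      then have "card (cls (x j)) \<le> card {j}"
        by (intro card_mono) simp_all
      then have "card (cls (x j)) \<le> 1" by simp
      then have "cls (x j) \<noteq> p" using \<open>card p = 2\<close> by auto
      then show ?thesis using True by (simp add: Eset_def)
    next
      case False
      have "cls (x j) = {j, w j}" using assms jn False by (auto simp: allowed_def)
      then show ?thesis using False jn by (auto simp: Eset_def)
    qed
  qed (simp add: Eset_def)
  then have "Eset {..<n} w p = {j \<in> {..<n}. cls (x j) = p}" by (rule set_eqI)
  then show ?thesis unfolding if_P[OF True] .
next
  case False
  have "Eset {..<n} w p = {}"
  proof (rule equals0I)
    fix j assume "j \<in> Eset {..<n} w p"
    then have "w j \<noteq> j" "{j, w j} = p" by (simp_all add: Eset_def)
    then have "card p = 2" by auto
    then show False using False by simp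
  qed
  then show ?thesis unfolding if_not_P[OF False] .
qed

lemma lookup_sign_mult:
  "Poly_Mapping.lookup (of_int (sign w) * (P :: 'd mpoly)) m = sign w * Poly_Mapping.lookup P m"
proof (cases "evenperm w")
  case True
  then show ?thesis by (simp add: sign_def)
next
  case False
  then have "of_int (sign w) * P = - P" by (simp add: sign_def)
  then show ?thesis using False by (simp add: sign_def)
qed

theorem corollary2p4:
  fixes adj :: "'d::finite vtx \<Rightarrow> 'd vtx \<Rightarrow> bool" and n :: nat
  assumes "periodic_graph n adj"
  shows "cancellation_free n (charmat_one adj)"
proof -
  let ?f = "charmat_one adj"
  let ?P = "{p. p permutes {0..<n}}"
  have finP: "finite ?P" by (rule finite_permutations) simp
  have coh_w: "coh n (perm_term n ?f w)" for w
    unfolding perm_term_def by (rule coh_prod, rule coh_entry) simp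
  have keys_w: "\<exists>x. (\<forall>i<n. allowed i (w i) (x i)) \<and> m = (\<Sum>i<n. Poly_Mapping.single (x i) 1)"
    if "m \<in> Poly_Mapping.keys (perm_term n ?f w)" for w m
  proof -
    have "Poly_Mapping.keys (\<Prod>i<n. ?f i (w i)) \<subseteq>
      {(\<Sum>i<n. Poly_Mapping.single (x i) 1) | x. \<forall>i<n. allowed i (w i) (x i)}"
      by (rule keys_prod_sub) (rule keys_entry)
    then show ?thesis using that unfolding perm_term_def by blast
  qed
  have sgn: "sign w = sign w'"
    if w: "w \<in> ?P" and w': "w' \<in> ?P" and m: "m \<in> Poly_Mapping.keys (perm_term n ?f w)"
      and m': "m \<in> Poly_Mapping.keys (perm_term n ?f w')" for w w' m
  proof -
    obtain x where x: "\<forall>i<n. allowed i (w i) (x i)" and mx: "m = (\<Sum>i<n. Poly_Mapping.single (x i) 1)"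
      using keys_w[OF m] by blast
    obtain x' where x': "\<forall>i<n. allowed i (w' i) (x' i)" and mx': "m = (\<Sum>i<n. Poly_Mapping.single (x' i) 1)"
      using keys_w[OF m'] by blast
    have wp: "w permutes {..<n}" and wp': "w' permutes {..<n}" using w w' by (auto simp: atLeast0LessThan)
    have E: "card (Eset {..<n} w p) = card (Eset {..<n} w' p)" for p
      using Eset_choice[OF x, of p] Eset_choice[OF x', of p] count_transfer[of x n x' cls p] mx mx'
      by simp
    show ?thesis by (rule sign_eq_Eset[OF wp wp' _ E]) simp
  qed
  show ?thesis
    unfolding cancellation_free_def
  proof (intro ballI impI subsetI)
    fix w m
    assume w: "w \<in> ?P" and nz: "perm_term n ?f w \<noteq> 0" and m: "m \<in> Poly_Mapping.keys (perm_term n ?f w)"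
    let ?c = "sgnm n m * sign w"
    have det: "Poly_Mapping.lookup (det_poly n ?f) m = (\<Sum>w'\<in>?P. sign w' * Poly_Mapping.lookup (perm_term n ?f w') m)"
      unfolding det_poly_def by (simp add: lookup_sum lookup_sign_mult)
    have term_nonneg: "0 \<le> ?c * (sign w' * Poly_Mapping.lookup (perm_term n ?f w') m)" if w': "w' \<in> ?P" for w'
    proof (cases "m \<in> Poly_Mapping.keys (perm_term n ?f w')")
      case True
      have "sign w' = sign w" using sgn[OF w' w True m] .
      then have ss: "sign w * sign w' = 1" by (simp add: sign_def)
      have "?c * (sign w' * Poly_Mapping.lookup (perm_term n ?f w') m)
          = (sign w * sign w') * (sgnm n m * Poly_Mapping.lookup (perm_term n ?f w') m)"
        by (simp only: mult_ac)
      also have "\<dots> = sgnm n m * Poly_Mapping.lookup (perm_term n ?f w') m"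
        by (simp only: ss mult_1)
      finally have eq: "?c * (sign w' * Poly_Mapping.lookup (perm_term n ?f w') m)
          = sgnm n m * Poly_Mapping.lookup (perm_term n ?f w') m" .
      show ?thesis unfolding eq using coh_w[of w'] unfolding coh_def by blast
    next
      case False
      then show ?thesis by (simp add: in_keys_iff)
    qed
    have term_pos: "0 < ?c * (sign w * Poly_Mapping.lookup (perm_term n ?f w) m)"
    proof -
      have "?c * (sign w * Poly_Mapping.lookup (perm_term n ?f w) m)
          = (sign w * sign w) * (sgnm n m * Poly_Mapping.lookup (perm_term n ?f w) m)"
        by (simp add: algebra_simps)
      also have "sign w * sign w = 1" by (simp add: sign_def)
      finally have eq: "?c * (sign w * Poly_Mapping.lookup (perm_term n ?f w) m)
          = sgnm n m * Poly_Mapping.lookup (perm_term n ?f w) m" by simp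
      have "sgnm n m \<noteq> 0" by (simp add: sgnm_def)
      moreover have "Poly_Mapping.lookup (perm_term n ?f w) m \<noteq> 0" using m by (simp add: in_keys_iff)
      moreover have "0 \<le> sgnm n m * Poly_Mapping.lookup (perm_term n ?f w) m"
        using coh_w[of w] unfolding coh_def by simp
      ultimately show ?thesis unfolding eq by (simp add: order_le_less)
    qed
    have "0 < (\<Sum>w'\<in>?P. ?c * (sign w' * Poly_Mapping.lookup (perm_term n ?f w') m))"
      apply (rule sum_pos2[OF finP w])
       apply (rule term_pos)
      apply (erule term_nonneg)
      done
    then have "?c * Poly_Mapping.lookup (det_poly n ?f) m \<noteq> 0"
      unfolding det sum_distrib_left by simp
    then show "m \<in> Poly_Mapping.keys (det_poly n ?f)" by (simp add: in_keys_iff)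
  qed
qed

end
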